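(* Let $G=(V,E)$ be a connected, locally finite graph and let $\sigma^0\in\{-1,+1\}^V$. Let $\gamma$ be a finite contour with respect to $\sigma^0$, and let $\sigma\in\{-1,+1\}^V$ be the configuration with $\sigma_v=-\sigma^0_v$ for $v\in V(\gamma)$ and $\sigma_v=\sigma^0_v$ for $v\notin V(\gamma)$. Then $$H(\sigma)-H(\sigma^0)\ \geq\ \big({\rm IC}_G-2\,\delta_{\rm broken}(\sigma^0)\big)\,|\gamma|,$$ where $H(\sigma)-H(\sigma^0):=\sum_{\{v,w\}\in E}\big(\mathbf 1_{\sigma_v\neq\sigma_w}-\mathbf 1_{\sigma^0_v\neq\sigma^0_w}\big)$ (a finite sum, since only edges with an endpoint in $V(\gamma)$ contribute).
   Context: A contour with respect to $\sigma^0$ is a connected subgraph $\gamma$ of $G$ (on which the configuration is taken to be flipped relative to $\sigma^0$). $|\gamma|$ denotes the number of vertices of $\gamma$. For a finite subgraph $H$, $\partial H$ is the set of edges $(v,w)\in E$ with $v\in V(H)$, $w\notin V(H)$, and the isoperimetric constant is ${\rm IC}_G=\inf\{|\partial H|/|H|: H \text{ finite non-empty subgraph of }G\}$. For a configuration $\eta$, its broken bonds are the edges $\{v,w\}$ with $\eta_v\eta_w=-1$, and $\delta_{\rm broken}(\eta)$ is the maximum degree of a vertex in the subgraph formed by the broken bonds, i.e. the maximal number of broken bonds incident to a single vertex. *)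

theory Defs
  imports Complex_Main "HOL-Library.Extended_Real"
begin

text \<open>A simple graph on the vertex type 'a (vertex set V = UNIV),
  given by a symmetric irreflexive adjacency relation E.\<close>

definition simple_graph :: "('a \<Rightarrow> 'a \<Rightarrow> bool) \<Rightarrow> bool" where
  "simple_graph E \<longleftrightarrow> (\<forall>v w. E v w \<longrightarrow> E w v) \<and> (\<forall>v. \<not> E v v)"

definition locally_finite :: "('a \<Rightarrow> 'a \<Rightarrow> bool) \<Rightarrow> bool" where
  "locally_finite E \<longleftrightarrow> (\<forall>v. finite {w. E v w})"

definition connected_graph :: "('a \<Rightarrow> 'a \<Rightarrow> bool) \<Rightarrow> bool" where
  "connected_graph E \<longleftrightarrow> (\<forall>u v. E\<^sup>*\<^sup>* u v)"

definition connected_set :: "('a \<Rightarrow> 'a \<Rightarrow> bool) \<Rightarrow> 'a set \<Rightarrow> bool" where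
  "connected_set E S \<longleftrightarrow> S \<noteq> {} \<and>
     (\<forall>u\<in>S. \<forall>v\<in>S. (\<lambda>x y. E x y \<and> x \<in> S \<and> y \<in> S)\<^sup>*\<^sup>* u v)"

definition is_config :: "('a \<Rightarrow> int) \<Rightarrow> bool" where
  "is_config \<sigma> \<longleftrightarrow> (\<forall>v. \<sigma> v = 1 \<or> \<sigma> v = -1)"

definition edge_boundary :: "('a \<Rightarrow> 'a \<Rightarrow> bool) \<Rightarrow> 'a set \<Rightarrow> ('a \<times> 'a) set" where
  "edge_boundary E H = {(v, w). E v w \<and> v \<in> H \<and> w \<notin> H}"

text \<open>Isoperimetric constant IC_G (infimum over finite non-empty subgraphs;
  |dH| and |H| only depend on the vertex set of H).\<close>
definition iso_const :: "('a \<Rightarrow> 'a \<Rightarrow> bool) \<Rightarrow> real" where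
  "iso_const E = Inf {real (card (edge_boundary E H)) / real (card H) | H. finite H \<and> H \<noteq> {}}"

definition edges :: "('a \<Rightarrow> 'a \<Rightarrow> bool) \<Rightarrow> 'a set set" where
  "edges E = {{v, w} | v w. E v w}"

definition broken :: "('a \<Rightarrow> int) \<Rightarrow> 'a set \<Rightarrow> real" where
  "broken \<sigma> e = (if \<exists>v w. e = {v, w} \<and> \<sigma> v \<noteq> \<sigma> w then 1 else 0)"

definition broken_degree :: "('a \<Rightarrow> 'a \<Rightarrow> bool) \<Rightarrow> ('a \<Rightarrow> int) \<Rightarrow> 'a \<Rightarrow> nat" where
  "broken_degree E \<sigma> v = card {w. E v w \<and> \<sigma> v * \<sigma> w = -1}"

definition delta_broken :: "('a \<Rightarrow> 'a \<Rightarrow> bool) \<Rightarrow> ('a \<Rightarrow> int) \<Rightarrow> ereal" where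
  "delta_broken E \<sigma> = (SUP v. ereal (real (broken_degree E \<sigma> v)))"

text \<open>H(sigma) - H(sigma0) = sum over edges of (1[broken in sigma] - 1[broken in sigma0]);
  the sum is taken over the edges where the summand is nonzero (finitely many in the
  situation of the theorem), which is the same as the sum over all edges.\<close>
definition energy_diff :: "('a \<Rightarrow> 'a \<Rightarrow> bool) \<Rightarrow> ('a \<Rightarrow> int) \<Rightarrow> ('a \<Rightarrow> int) \<Rightarrow> real" where
  "energy_diff E \<sigma> \<sigma>0 =
     (\<Sum>e\<in>{e \<in> edges E. broken \<sigma> e \<noteq> broken \<sigma>0 e}. broken \<sigma> e - broken \<sigma>0 e)"

end

theory Submission
  imports Defs
begin

lemma broken_pair: "broken s {v, w} = (if s v \<noteq> s w then 1 else 0)"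
  unfolding broken_def by (auto simp: doubleton_eq_iff)

theorem lemma3p3:
  fixes E :: "'a \<Rightarrow> 'a \<Rightarrow> bool" and \<sigma>0 \<sigma> :: "'a \<Rightarrow> int" and \<gamma> :: "'a set"
  assumes "simple_graph E" and "locally_finite E" and "connected_graph E"
    and "is_config \<sigma>0"
    and "finite \<gamma>" and "connected_set E \<gamma>"
    and "\<And>v. \<sigma> v = (if v \<in> \<gamma> then - \<sigma>0 v else \<sigma>0 v)"
  shows "ereal (energy_diff E \<sigma> \<sigma>0)
           \<ge> (ereal (iso_const E) - 2 * delta_broken E \<sigma>0) * ereal (real (card \<gamma>))"
proof -
  have sym: "\<And>v w. E v w \<Longrightarrow> E w v" using assms(1) unfolding simple_graph_def by blast
  have cfg: "\<And>v. \<sigma>0 v = 1 \<or> \<sigma>0 v = -1" using assms(4) unfolding is_config_def by blast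
  have ne: "\<gamma> \<noteq> {}" using assms(6) unfolding connected_set_def by blast
  have cpos: "card \<gamma> > 0" using ne assms(5) by (simp add: card_gt_0_iff)
  define B where "B = edge_boundary E \<gamma>"
  define Bb where "Bb = {p \<in> B. \<sigma>0 (fst p) \<noteq> \<sigma>0 (snd p)}"
  have Bsub: "B \<subseteq> Sigma \<gamma> (\<lambda>v. {w. E v w})" unfolding B_def edge_boundary_def by auto
  have finB: "finite B"
    by (rule finite_subset[OF Bsub]) (use assms(2,5) in \<open>auto simp: locally_finite_def\<close>)
  have finBb: "finite Bb" using finB unfolding Bb_def by simp
  define S where "S = {e \<in> edges E. broken \<sigma> e \<noteq> broken \<sigma>0 e}"
  define f where "f = (\<lambda>p::'a\<times>'a. {fst p, snd p})"
  have S_eq: "S = f ` B"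
  proof
    show "S \<subseteq> f ` B"
    proof
      fix e assume "e \<in> S"
      then obtain v w where e: "e = {v,w}" "E v w" and d: "broken \<sigma> {v,w} \<noteq> broken \<sigma>0 {v,w}"
        unfolding S_def edges_def by auto
      have "(v \<in> \<gamma> \<and> w \<notin> \<gamma>) \<or> (w \<in> \<gamma> \<and> v \<notin> \<gamma>)"
        using d assms(7)[of v] assms(7)[of w] by (auto simp: broken_pair split: if_splits)
      then show "e \<in> f ` B"
      proof
        assume "v \<in> \<gamma> \<and> w \<notin> \<gamma>"
        then have "(v,w) \<in> B" using e unfolding B_def edge_boundary_def by auto
        then show ?thesis using e unfolding f_def by force
      next
        assume "w \<in> \<gamma> \<and> v \<notin> \<gamma>"
        then have "(w,v) \<in> B" using e sym unfolding B_def edge_boundary_def by auto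
        moreover have "e = f (w,v)" using e unfolding f_def by auto
        ultimately show ?thesis by blast
      qed
    qed
  next
    show "f ` B \<subseteq> S"
    proof
      fix e assume "e \<in> f ` B"
      then obtain v w where vw: "(v,w) \<in> B" "e = {v,w}" unfolding f_def by auto
      then have "E v w" "v \<in> \<gamma>" "w \<notin> \<gamma>" unfolding B_def edge_boundary_def by auto
      then show "e \<in> S" unfolding S_def edges_def using vw(2) assms(7)[of v] assms(7)[of w] cfg[of v] cfg[of w]
        by (auto simp: broken_pair)
    qed
  qed
  have inj: "inj_on f B"
  proof
    fix p q assume "p \<in> B" "q \<in> B" "f p = f q"
    then show "p = q" unfolding B_def edge_boundary_def f_def by (auto simp: doubleton_eq_iff prod_eq_iff)
  qed
  have val: "\<And>p. p \<in> B \<Longrightarrow> broken \<sigma> (f p) - broken \<sigma>0 (f p) = (if p \<in> Bb then -1 else 1)"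
  proof -
    fix p assume "p \<in> B"
    then obtain v w where "p = (v,w)" "v \<in> \<gamma>" "w \<notin> \<gamma>" unfolding B_def edge_boundary_def by auto
    then show "?thesis p" unfolding f_def Bb_def using \<open>p \<in> B\<close> assms(7)[of v] assms(7)[of w] cfg[of v] cfg[of w]
      by (auto simp: broken_pair)
  qed
  have ED: "energy_diff E \<sigma> \<sigma>0 = real (card B) - 2 * real (card Bb)"
  proof -
    have "energy_diff E \<sigma> \<sigma>0 = (\<Sum>e\<in>S. broken \<sigma> e - broken \<sigma>0 e)" unfolding energy_diff_def S_def by simp
    also have "\<dots> = (\<Sum>p\<in>B. broken \<sigma> (f p) - broken \<sigma>0 (f p))" unfolding S_eq by (rule sum.reindex[OF inj, unfolded comp_def])
    also have "\<dots> = (\<Sum>p\<in>B. (if p \<in> Bb then -1 else 1))" by (rule sum.cong) (auto simp: val)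
    also have "\<dots> = real (card (B - Bb)) - real (card Bb)"
      using finB unfolding sum.If_cases[OF finB] by (simp add: Bb_def Int_def Diff_eq; metis)
    also have "\<dots> = real (card B) - 2 * real (card Bb)"
      using finBb by (simp add: card_Diff_subset Bb_def card_mono[OF finB] of_nat_diff)
    finally show ?thesis .
  qed
  have IC: "iso_const E * real (card \<gamma>) \<le> real (card B)"
  proof -
    have "iso_const E \<le> real (card B) / real (card \<gamma>)"
      unfolding iso_const_def B_def
      by (rule cInf_lower) (use assms(5) ne in \<open>auto intro!: bdd_belowI[where m=0]\<close>)
    then show ?thesis using cpos by (simp add: pos_le_divide_eq)
  qed
  have Bbsub: "Bb \<subseteq> Sigma \<gamma> (\<lambda>v. {w. E v w \<and> \<sigma>0 v * \<sigma>0 w = -1})"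
    proof
    fix p assume "p \<in> Bb"
    then obtain v w where p: "p = (v,w)" "E v w" "v \<in> \<gamma>" "\<sigma>0 v \<noteq> \<sigma>0 w"
      unfolding Bb_def B_def edge_boundary_def by auto
    then have "\<sigma>0 v * \<sigma>0 w = -1" using cfg[of v] cfg[of w] by auto
    then show "p \<in> Sigma \<gamma> (\<lambda>v. {w. E v w \<and> \<sigma>0 v * \<sigma>0 w = -1})" using p by auto
  qed
  have finfib: "\<And>v. finite {w. E v w \<and> \<sigma>0 v * \<sigma>0 w = -1}" using assms(2) unfolding locally_finite_def by auto
  have cardBb: "card Bb \<le> (\<Sum>v\<in>\<gamma>. broken_degree E \<sigma>0 v)"
  proof -
    have "card Bb \<le> card (Sigma \<gamma> (\<lambda>v. {w. E v w \<and> \<sigma>0 v * \<sigma>0 w = -1}))"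
      by (rule card_mono[OF _ Bbsub]) (use assms(5) finfib in auto)
    also have "\<dots> = (\<Sum>v\<in>\<gamma>. broken_degree E \<sigma>0 v)"
      unfolding broken_degree_def using assms(5) finfib by (simp add: card_SigmaI)
    finally show ?thesis .
  qed
  have dge: "\<And>v. ereal (real (broken_degree E \<sigma>0 v)) \<le> delta_broken E \<sigma>0"
    unfolding delta_broken_def by (rule SUP_upper) simp
  show ?thesis
  proof (cases "delta_broken E \<sigma>0")
    case PInf
    then show ?thesis using cpos by simp
  next
    case MInf
    then show ?thesis using dge[of undefined] by simp
  next
    case (real d)
    have dv: "real (broken_degree E \<sigma>0 v) \<le> d" for v using dge[of v] real by simp
    have "real (card Bb) \<le> (\<Sum>v\<in>\<gamma>. real (broken_degree E \<sigma>0 v))"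
      using cardBb by (metis of_nat_le_iff of_nat_sum)
    also have "\<dots> \<le> (\<Sum>v\<in>\<gamma>. d)" by (rule sum_mono) (rule dv)
    finally have "real (card Bb) \<le> d * real (card \<gamma>)" by (simp add: mult.commute)
    then have "(iso_const E - 2 * d) * real (card \<gamma>) \<le> energy_diff E \<sigma> \<sigma>0"
      using IC ED by (simp add: algebra_simps)
    then show ?thesis using real by simp
  qed
qed

end
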